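(* Let $k\in\{0,\dots,n\}$. A run $R$ of an $n$-DPDA is $k$-upper if and only if at least one of the following holds: (1) $|R|=0$; (2) $|R|=1$ and the only step of $R$ is a read, or performs $\mathsf{push}^r_\gamma$ for some $r$, or performs $\mathsf{pop}^r$ for some $r\le k$; (3) the first step of $R$ performs $\mathsf{push}^r_\gamma$ for some $r\ge k+1$ and $R[1,|R|]$ is an $r$-return; (4) $R$ is a composition $R_1\circ R_2$ of two nonempty $k$-upper runs.
   Context: Stacks: fix order $n\ge1$, finite stack alphabet $\Gamma$. A $0$-stack is $(\gamma,x)$ with $\gamma\in\Gamma$, $x=(x_n,\dots,x_1)$ a vector of $n$ positive integers (position). For $k\in\{1,\dots,n\}$ a $k$-stack is a finite list $[s_1,\dots,s_m]$ ($m\ge0$) of nonempty $(k-1)$-stacks such that for some $x_n,\dots,x_{k+1}$, every position in $s_i$ has the form $(x_n,\dots,x_{k+1},i,y_{k-1},\dots,y_1)$. The top is at the right; $s^k:s^{k-1}$ appends at the top (right-associative); for $s^r=t^r:t^{r-1}:\dots:t^k$, $\mathrm{top}^k(s^r)=t^k$. Equality of stacks includes positions. For $k<n$, $\mathsf p_{+1}(s^k)$ adds $1$ to the $(n-k)$-th coordinate of all positions. Operations of order $k\ge1$: $\mathsf{pop}^k(s^r:\dots:s^k:s^{k-1})=s^r:\dots:s^k$, defined only if the topmost $k$-stack has at least two $(k-1)$-stacks; $\mathsf{push}^k_\gamma(s^r:\dots:s^0)=s^r:\dots:s^{k+1}:(s^k:\dots:s^0):\mathsf p_{+1}(s^{k-1}:\dots:s^1:(\gamma,x))$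 where $s^0=(\gamma',x)$. An $n$-DPDA has transitions determined by state and topmost stack symbol, each either $\mathrm{read}(\vec q)$ ($\vec q:A\to Q$ injective; leads to $(\vec q(a),s)$, reading $a$) or $(q,op)$ with $op$ a stack operation of order $\le n$ (leads to $(q,op(s))$ if defined). Configurations are (state, nonempty $n$-stack). A run is a finite sequence $R=c_0,\dots,c_m$ with each $c_i$ a successor of $c_{i-1}$; $R(i)=c_i$, $|R|=m$, $R[i,j]=c_i,\dots,c_j$; $\circ$ is concatenation. $\mathrm{top}^k(c)$, $\mathsf{pop}^k(c)$ refer to the stack of $c$. History: for a run $R$ and a $0$-stack $s^0$ of $R(|R|)$, $\mathrm{hist}(R,s^0)$ is a $0$-stack of $R(0)$: if $|R|=0$ it is $s^0$; if $R=S\circ T$, $|T|=1$, and the last step is a read or a $\mathsf{pop}$, or a $\mathsf{push}^r_\gamma$ with $s^0$ not in the topmost $(r-1)$-stack of $R(|R|)$, it is $\mathrm{hist}(S,s^0)$; if the last step is $\mathsf{push}^r_\gamma$ and $s^0$ is in the topmost $(r-1)$-stack of $R(|R|)$, it is $\mathrm{hist}(S,t^0)$ with $t^0$ equal to $s^0$ with the $(n-r+1)$-th position coordinate decreased by $1$. For a $k$-stack $s^k$ of $R(|R|)$, $k\ge1$, $\mathrm{hist}(R,s^k)$ is the $k$-stack of $R(0)$ containing $\mathrm{hist}(R,s^0)$ for all $0$-stacks $s^0$ of $s^k$. For $k\in\{0,\dots,n\}$, $R$ is $k$-upper if $\mathrm{hist}(R,\mathrm{top}^k(R(|R|)))=\mathrm{top}^k(R(0))$.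 For $k\in\{1,\dots,n\}$, $R$ is a $k$-return if $\mathrm{hist}(R,\mathrm{top}^{k-1}(R(|R|)))=\mathrm{top}^{k-1}(\mathsf{pop}^k(R(0)))$ and $R[i,|R|]$ is not $(k-1)$-upper for every $i\in\{0,\dots,|R|-1\}$. *)

theory Defs
  imports Main
begin

(* Higher-order stacks without explicit positions: positions of 0-stacks are
   fully determined by the tree structure (the i-th (k-1)-stack of a k-stack has
   k-th coordinate i), so a 0-stack (gamma, x) of an n-stack s is recovered as
   an element of zeros s, with x = [x_n, ..., x_1] (list head = x_n). *)

datatype 'g stack = Sym 'g | Stk "'g stack list"

lemma size_nth_less_stk [termination_simp]:
  "i < length xs \<Longrightarrow> size (xs ! i) < Suc (size_list size xs)"
  by (meson le_imp_less_Suc nth_mem size_list_estimation' order_refl)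

lemma size_last_less_stk [termination_simp]:
  "xs \<noteq> [] \<Longrightarrow> size (last xs) < Suc (size_list size xs)"
  by (meson last_in_set le_imp_less_Suc size_list_estimation' order_refl)

fun nonempty_stack :: "nat \<Rightarrow> 'g stack \<Rightarrow> bool" where
  "nonempty_stack 0 (Sym g) = True"
| "nonempty_stack (Suc k) (Stk xs) = (xs \<noteq> [])"
| "nonempty_stack _ _ = False"

fun is_stack :: "nat \<Rightarrow> 'g stack \<Rightarrow> bool" where
  "is_stack 0 (Sym g) = True"
| "is_stack (Suc k) (Stk xs) = (\<forall>t\<in>set xs. is_stack k t \<and> nonempty_stack k t)"
| "is_stack _ _ = False"

(* the 0-stacks of a stack, with their positions (1-based indices, outermost first) *)
lemma UN_cong_zeros [fundef_cong]:
  "A = B \<Longrightarrow> (\<And>x. x \<in> B \<Longrightarrow> f x = g x) \<Longrightarrow> (\<Union>x\<in>A. f x) = (\<Union>x\<in>B. g x)"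
  by auto

function zeros :: "'g stack \<Rightarrow> ('g \<times> nat list) set" where
  "zeros (Sym g) = {(g, [])}"
| "zeros (Stk xs) = (\<Union>i\<in>{..<length xs}. (\<lambda>(g, p). (g, Suc i # p)) ` zeros (xs ! i))"
  by pat_completeness auto
termination
  by (relation "measure size") (auto simp: size_nth_less_stk)

fun toppos :: "'g stack \<Rightarrow> nat list" where
  "toppos (Sym g) = []"
| "toppos (Stk xs) = (if xs = [] then [] else length xs # toppos (last xs))"

fun topsym :: "'g stack \<Rightarrow> 'g" where
  "topsym (Sym g) = g"
| "topsym (Stk xs) = (if xs = [] then undefined else topsym (last xs))"

fun settop :: "'g \<Rightarrow> 'g stack \<Rightarrow> 'g stack" where
  "settop g (Sym _) = Sym g"
| "settop g (Stk xs) = (if xs = [] then Stk [] else Stk (butlast xs @ [settop g (last xs)]))"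

(* pop / push acting on the topmost stack at depth d (depth 0 = the whole stack) *)
fun pop_at :: "nat \<Rightarrow> 'g stack \<Rightarrow> 'g stack option" where
  "pop_at 0 (Stk xs) = (if 2 \<le> length xs then Some (Stk (butlast xs)) else None)"
| "pop_at (Suc d) (Stk xs) =
     (if xs = [] then None else map_option (\<lambda>t. Stk (butlast xs @ [t])) (pop_at d (last xs)))"
| "pop_at _ (Sym _) = None"

fun push_at :: "nat \<Rightarrow> 'g \<Rightarrow> 'g stack \<Rightarrow> 'g stack option" where
  "push_at 0 g (Stk xs) = (if xs = [] then None else Some (Stk (xs @ [settop g (last xs)])))"
| "push_at (Suc d) g (Stk xs) =
     (if xs = [] then None else map_option (\<lambda>t. Stk (butlast xs @ [t])) (push_at d g (last xs)))"
| "push_at _ _ (Sym _) = None"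

datatype 'g sop = Pop nat | Push nat 'g

(* operation of order k on an n-stack: acts on the topmost k-stack, at depth n - k *)
fun apply_op :: "nat \<Rightarrow> 'g sop \<Rightarrow> 'g stack \<Rightarrow> 'g stack option" where
  "apply_op n (Pop k) s = pop_at (n - k) s"
| "apply_op n (Push k g) s = push_at (n - k) g s"

fun op_order :: "'g sop \<Rightarrow> nat" where
  "op_order (Pop k) = k"
| "op_order (Push k g) = k"

datatype ('q, 'g, 'a) trans = Read "'a \<Rightarrow> 'q" | Op 'q "'g sop"

type_synonym ('q, 'g, 'a) dpda = "'q \<Rightarrow> 'g \<Rightarrow> ('q, 'g, 'a) trans"

definition is_dpda :: "nat \<Rightarrow> ('q, 'g, 'a) dpda \<Rightarrow> bool" where
  "is_dpda n D \<longleftrightarrow>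
     (\<forall>q g f. D q g = Read f \<longrightarrow> inj f) \<and>
     (\<forall>q g p op. D q g = Op p op \<longrightarrow> 1 \<le> op_order op \<and> op_order op \<le> n)"

type_synonym ('q, 'g) config = "'q \<times> 'g stack"

definition is_config :: "nat \<Rightarrow> ('q, 'g) config \<Rightarrow> bool" where
  "is_config n c \<longleftrightarrow> is_stack n (snd c) \<and> nonempty_stack n (snd c)"

definition step_of :: "('q, 'g, 'a) dpda \<Rightarrow> ('q, 'g) config \<Rightarrow> ('q, 'g, 'a) trans" where
  "step_of D c = D (fst c) (topsym (snd c))"

definition successor :: "nat \<Rightarrow> ('q, 'g, 'a) dpda \<Rightarrow> ('q, 'g) config \<Rightarrow> ('q, 'g) config \<Rightarrow> bool" where
  "successor n D c c' \<longleftrightarrow>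
     (case step_of D c of
        Read f \<Rightarrow> (\<exists>a. c' = (f a, snd c))
      | Op p op \<Rightarrow> fst c' = p \<and> apply_op n op (snd c) = Some (snd c'))"

(* a run R = c_0,...,c_m is the list [c_0,...,c_m]; |R| = length R - 1 *)
definition is_run :: "nat \<Rightarrow> ('q, 'g, 'a) dpda \<Rightarrow> ('q, 'g) config list \<Rightarrow> bool" where
  "is_run n D R \<longleftrightarrow> R \<noteq> [] \<and> (\<forall>c\<in>set R. is_config n c) \<and>
     (\<forall>i. i + 1 < length R \<longrightarrow> successor n D (R ! i) (R ! (i + 1)))"

abbreviation rlen :: "'c list \<Rightarrow> nat" where "rlen R \<equiv> length R - 1"

(* composition of runs R1 o R2 (last configuration of R1 = first of R2) *)
definition comp_run :: "'c list \<Rightarrow> 'c list \<Rightarrow> 'c list" where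
  "comp_run R1 R2 = R1 @ tl R2"

(* one backward step of the history of a position x, for a step c -> c' *)
definition hist_step :: "nat \<Rightarrow> ('q, 'g, 'a) dpda \<Rightarrow> ('q, 'g) config \<Rightarrow> ('q, 'g) config
     \<Rightarrow> nat list \<Rightarrow> nat list" where
  "hist_step n D c c' x =
     (case step_of D c of
        Op p (Push r g) \<Rightarrow>
          (if take (n - r + 1) x = take (n - r + 1) (toppos (snd c'))
           then x[n - r := x ! (n - r) - 1] else x)
      | _ \<Rightarrow> x)"

(* position of hist(R, s^0) for s^0 at position x in R(|R|) *)
definition hist :: "nat \<Rightarrow> ('q, 'g, 'a) dpda \<Rightarrow> ('q, 'g) config list \<Rightarrow> nat list \<Rightarrow> nat list" where
  "hist n D R x = foldr (\<lambda>(c, c') y. hist_step n D c c' y) (zip R (tl R)) x"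

definition top_zeros :: "nat \<Rightarrow> nat \<Rightarrow> ('q, 'g) config \<Rightarrow> nat list set" where
  "top_zeros n k c = {x. \<exists>g. (g, x) \<in> zeros (snd c) \<and> take (n - k) x = take (n - k) (toppos (snd c))}"

(* location (coordinates x_n..x_{k+1}) of the k-stack of R(0) containing hist(R,s^0)
   for all 0-stacks s^0 in the set of positions P (None if there is no such k-stack) *)
definition hist_kstack :: "nat \<Rightarrow> ('q, 'g, 'a) dpda \<Rightarrow> nat \<Rightarrow> ('q, 'g) config list
     \<Rightarrow> nat list set \<Rightarrow> nat list option" where
  "hist_kstack n D k R P =
     (if \<exists>L. \<forall>x\<in>P. take (n - k) (hist n D R x) = L
      then Some (THE L. \<forall>x\<in>P. take (n - k) (hist n D R x) = L) else None)"

definition is_upper :: "nat \<Rightarrow> ('q, 'g, 'a) dpda \<Rightarrow> nat \<Rightarrow> ('q, 'g) config list \<Rightarrow> bool" where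
  "is_upper n D k R \<longleftrightarrow>
     hist_kstack n D k R (top_zeros n k (last R)) = Some (take (n - k) (toppos (snd (hd R))))"

definition is_return :: "nat \<Rightarrow> ('q, 'g, 'a) dpda \<Rightarrow> nat \<Rightarrow> ('q, 'g) config list \<Rightarrow> bool" where
  "is_return n D k R \<longleftrightarrow>
     (\<exists>s'. pop_at (n - k) (snd (hd R)) = Some s' \<and>
        hist_kstack n D (k - 1) R (top_zeros n (k - 1) (last R))
          = Some (take (n - (k - 1)) (toppos s'))) \<and>
     (\<forall>i < rlen R. \<not> is_upper n D (k - 1) (drop i R))"

end

theory Submission
  imports Defs
begin

fun sub_at :: "'g stack \<Rightarrow> nat list \<Rightarrow> 'g stack option" where
  "sub_at s [] = Some s"
| "sub_at (Sym g) (i # y) = None"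
| "sub_at (Stk xs) (i # y) = (if 0 < i \<and> i \<le> length xs then sub_at (xs ! (i - 1)) y else None)"

lemma sub_at_append_None: "sub_at s y = None \<Longrightarrow> sub_at s (y @ z) = None"
  by (induction s y rule: sub_at.induct) auto

lemma last_nth' [simp]: "xs \<noteq> [] \<Longrightarrow> xs ! (length xs - Suc 0) = last xs"
  by (simp add: last_conv_nth)

lemma G1: "\<exists>u. sub_at s (take j (toppos s)) = Some u \<and> toppos s = take j (toppos s) @ toppos u"
proof (induction j arbitrary: s)
  case 0 then show ?case by simp
next
  case (Suc j)
  show ?case
  proof (cases s)
    case (Sym g) then show ?thesis by simp
  next
    case (Stk xs)
    show ?thesis
    proof (cases "xs = []")
      case True then show ?thesis using Stk by simp
    next
      case False
      obtain u where "sub_at (last xs) (take j (toppos (last xs))) = Some u"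
        "toppos (last xs) = take j (toppos (last xs)) @ toppos u" using Suc by blast
      then show ?thesis using Stk False by (auto simp: last_nth')
    qed
  qed
qed

lemma G2: "is_stack n s \<Longrightarrow> nonempty_stack n s \<Longrightarrow> length (toppos s) = n"
proof (induction n arbitrary: s)
  case 0 then show ?case by (cases s) auto
next
  case (Suc n)
  then obtain xs where s: "s = Stk xs" "xs \<noteq> []" by (cases s) auto
  then show ?case using Suc by auto
qed

lemma G2': "is_stack n s \<Longrightarrow> nonempty_stack n s \<Longrightarrow> sub_at s y = Some u \<Longrightarrow>
   length y \<le> n \<and> is_stack (n - length y) u \<and> nonempty_stack (n - length y) u"
proof (induction y arbitrary: n s)
  case Nil then show ?case by simp
next
  case (Cons i y)
  then obtain xs where s: "s = Stk xs" by (cases s) auto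
  with Cons obtain n' where n: "n = Suc n'" by (cases n) auto
  from Cons s have i: "0 < i" "i \<le> length xs" and u: "sub_at (xs ! (i - 1)) y = Some u"
    by (auto split: if_splits)
  have "xs ! (i - 1) \<in> set xs" using i by auto
  then have "is_stack n' (xs ! (i - 1)) \<and> nonempty_stack n' (xs ! (i - 1))"
    using Cons.prems s n by auto
  then show ?case using Cons.IH[of n' "xs ! (i - 1)"] u n by auto
qed

lemma G3: "is_stack n s \<Longrightarrow> nonempty_stack n s \<Longrightarrow> (topsym s, toppos s) \<in> zeros s"
proof (induction n arbitrary: s)
  case 0 then show ?case by (cases s) auto
next
  case (Suc n)
  then obtain xs where s: "s = Stk xs" "xs \<noteq> []" by (cases s) auto
  then have "is_stack n (last xs) \<and> nonempty_stack n (last xs)" using Suc by auto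
  then have "(topsym (last xs), toppos (last xs)) \<in> zeros (xs ! (length xs - 1))"
    using Suc.IH s by (simp add: last_nth')
  then show ?case using s
    by (auto intro!: bexI[where x="length xs - 1"] image_eqI[where x="(topsym (last xs), toppos (last xs))"])
qed

lemma P1: "pop_at d s = Some s' \<Longrightarrow> sub_at s' y \<noteq> None \<Longrightarrow> y \<noteq> take (length y) (toppos s) \<Longrightarrow>
  sub_at s' y = sub_at s y"
proof (induction d s arbitrary: s' y rule: pop_at.induct)
  case (1 xs)
  then show ?case
    by (cases y) (auto simp: nth_butlast split: if_splits)
next
  case (2 d xs)
  then obtain t where xs: "xs \<noteq> []" and t: "pop_at d (last xs) = Some t"
    and s': "s' = Stk (butlast xs @ [t])" by (auto split: if_splits)
  show ?case
  proof (cases y)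
    case Nil then show ?thesis using 2 by simp
  next
    case (Cons i y')
    show ?thesis
    proof (cases "i = length xs")
      case True
      have "sub_at t y' = sub_at (last xs) y'"
        using 2(1)[OF xs t] 2(3,4) Cons True s' xs by (auto simp: nth_append split: if_splits)
      then show ?thesis using Cons True s' xs by (simp add: nth_append last_nth')
    next
      case False
      then show ?thesis using Cons s' xs 2(3)
        by (auto simp: nth_append nth_butlast split: if_splits)
    qed
  qed
qed auto

lemma P2: "pop_at d s = Some s' \<Longrightarrow> sub_at s' y \<noteq> None \<Longrightarrow> sub_at s y \<noteq> None"
proof (induction d s arbitrary: s' y rule: pop_at.induct)
  case (1 xs)
  then show ?case
    by (cases y) (auto simp: nth_butlast split: if_splits)
next
  case (2 d xs)
  then obtain t where xs: "xs \<noteq> []" and t: "pop_at d (last xs) = Some t"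
    and s': "s' = Stk (butlast xs @ [t])" by (auto split: if_splits)
  show ?case
  proof (cases y)
    case Nil then show ?thesis by simp
  next
    case (Cons i y')
    show ?thesis
    proof (cases "i = length xs")
      case True
      have "sub_at (last xs) y' \<noteq> None"
        using 2(1)[OF xs t] 2(3) Cons True s' xs by (auto simp: nth_append split: if_splits)
      then show ?thesis using Cons True s' xs by (simp add: last_nth')
    next
      case False
      then show ?thesis using Cons s' xs 2(3)
        by (auto simp: nth_append nth_butlast split: if_splits)
    qed
  qed
qed auto

lemma P3: "pop_at d s = Some s' \<Longrightarrow> take d (toppos s') = take d (toppos s)"
proof (induction d s arbitrary: s' rule: pop_at.induct)
  case (2 d xs)
  then obtain t where xs: "xs \<noteq> []" and t: "pop_at d (last xs) = Some t"
    and s': "s' = Stk (butlast xs @ [t])" by (auto split: if_splits)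
  then show ?case using 2(1)[OF xs t] by simp
qed auto

lemma P4: "pop_at d s = Some s' \<Longrightarrow> sub_at s' (take (Suc d) (toppos s)) = None"
proof (induction d s arbitrary: s' rule: pop_at.induct)
  case (1 xs)
  then show ?case by (auto split: if_splits)
next
  case (2 d xs)
  then obtain t where xs: "xs \<noteq> []" and t: "pop_at d (last xs) = Some t"
    and s': "s' = Stk (butlast xs @ [t])" by (auto split: if_splits)
  then show ?case using 2(1)[OF xs t] by (simp add: nth_append)
qed auto

lemma ST1: "toppos (settop g u) = toppos u"
  by (induction g u rule: settop.induct) auto

lemma ST2: "map_option toppos (sub_at (settop g u) y) = map_option toppos (sub_at u y)"
proof (induction y arbitrary: u)
  case Nil then show ?case by (simp add: ST1)
next
  case (Cons i y)
  show ?case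
  proof (cases u)
    case (Sym x) then show ?thesis by simp
  next
    case (Stk xs)
    show ?thesis
    proof (cases "xs = [] \<or> i = 0 \<or> length xs < i")
      case True then show ?thesis using Stk by auto
    next
      case False
      then have xs: "xs \<noteq> []" and i: "0 < i" "i \<le> length xs" by auto
      show ?thesis
      proof (cases "i = length xs")
        case True then show ?thesis using Stk xs Cons.IH by (simp add: nth_append)
      next
        case False
        then have "i - 1 < length xs - 1" using i by arith
        then show ?thesis using Stk xs i by (simp add: nth_append nth_butlast)
      qed
    qed
  qed
qed

lemma Q0: "push_at d g s = Some s' \<Longrightarrow> d < length (toppos s)"
  by (induction d g s arbitrary: s' rule: push_at.induct) (auto split: if_splits)

lemma Q1: "push_at d g s = Some s' \<Longrightarrow> toppos s' = (toppos s)[d := toppos s ! d + 1]"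
proof (induction d g s arbitrary: s' rule: push_at.induct)
  case (1 g xs)
  then show ?case by (auto simp: ST1 split: if_splits)
next
  case (2 d g xs)
  then obtain t where xs: "xs \<noteq> []" and t: "push_at d g (last xs) = Some t"
    and s': "s' = Stk (butlast xs @ [t])" by (auto split: if_splits)
  then show ?case using 2(1)[OF xs t] by simp
qed auto

lemma Q2: "push_at d g s = Some s' \<Longrightarrow> sub_at s' y \<noteq> None \<Longrightarrow>
  take (Suc d) y \<noteq> take (Suc d) (toppos s') \<Longrightarrow> y \<noteq> take (length y) (toppos s') \<Longrightarrow>
  sub_at s' y = sub_at s y"
proof (induction d g s arbitrary: s' y rule: push_at.induct)
  case (1 g xs)
  then show ?case
    by (cases y) (auto simp: nth_append split: if_splits)
next
  case (2 d g xs)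
  then obtain t where xs: "xs \<noteq> []" and t: "push_at d g (last xs) = Some t"
    and s': "s' = Stk (butlast xs @ [t])" by (auto split: if_splits)
  show ?case
  proof (cases y)
    case Nil then show ?thesis using 2 by simp
  next
    case (Cons i y')
    show ?thesis
    proof (cases "i = length xs")
      case True
      have "sub_at t y' = sub_at (last xs) y'"
        using 2(1)[OF xs t] 2(3,4,5) Cons True s' xs by (auto simp: nth_append split: if_splits)
      then show ?thesis using Cons True s' xs by (simp add: nth_append)
    next
      case False
      then show ?thesis using Cons s' xs 2(3)
        by (auto simp: nth_append nth_butlast split: if_splits)
    qed
  qed
qed auto

lemma Q3: "push_at d g s = Some s' \<Longrightarrow> take (Suc d) y = take (Suc d) (toppos s') \<Longrightarrow>
  map_option toppos (sub_at s' y) = map_option toppos (sub_at s (y[d := y ! d - 1]))"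
proof (induction d g s arbitrary: s' y rule: push_at.induct)
  case (1 g xs)
  then have xs: "xs \<noteq> []" and s': "s' = Stk (xs @ [settop g (last xs)])" by (auto split: if_splits)
  then obtain y' where y: "y = Suc (length xs) # y'" using 1(2) by (cases y) auto
  then show ?case using xs s' by (simp add: nth_append ST2)
next
  case (2 d g xs)
  then obtain t where xs: "xs \<noteq> []" and t: "push_at d g (last xs) = Some t"
    and s': "s' = Stk (butlast xs @ [t])" by (auto split: if_splits)
  then obtain y' where y: "y = length xs # y'" and y': "take (Suc d) y' = take (Suc d) (toppos t)"
    using 2(3) by (cases y) auto
  show ?case using 2(1)[OF xs t y'] y xs s' by (simp add: nth_append)
qed auto

lemma Q4: "push_at d g s = Some s' \<Longrightarrow> pop_at d s' = Some s"
proof (induction d g s arbitrary: s' rule: push_at.induct)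
  case (1 g xs)
  then show ?case by (auto simp: Suc_le_eq split: if_splits)
next
  case (2 d g xs)
  then obtain t where xs: "xs \<noteq> []" and t: "push_at d g (last xs) = Some t"
    and s': "s' = Stk (butlast xs @ [t])" by (auto split: if_splits)
  then show ?case using 2(1)[OF xs t] by simp
qed auto

lemma take_upd_cond:
  "take m (if take (Suc j) x = T then x[j := x ! j - 1] else x) =
   (if take (Suc j) (take m x) = T then (take m x)[j := take m x ! j - 1] else take m x)"
proof (cases "Suc j \<le> m")
  case True
  then have "take (Suc j) (take m x) = take (Suc j) x" by (simp add: min_def)
  moreover have "take m (x[j := x ! j - 1]) = (take m x)[j := take m x ! j - 1]"
    using True by (cases "j < length x") (auto simp: take_update_swap list_update_beyond)
  ultimately show ?thesis by simp
next
  case False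
  then show ?thesis by (auto simp: list_update_beyond)
qed

lemma hist_step_take: "take m (hist_step n D c c' x) = hist_step n D c c' (take m x)"
  unfolding hist_step_def
  by (auto split: trans.splits sop.splits simp: take_upd_cond[where j="n - _", simplified])

lemma hist_single[simp]: "hist n D [c] x = x"
  by (simp add: hist_def)

lemma hist_cons2[simp]: "hist n D (c # c' # R) x = hist_step n D c c' (hist n D (c' # R) x)"
  by (simp add: hist_def)

lemma hist_take: "take m (hist n D R x) = hist n D R (take m x)"
proof (induction R rule: induct_list012)
  case 1 then show ?case by (simp add: hist_def)
next
  case (2 c) then show ?case by simp
next
  case (3 c c' R) then show ?case by (simp add: hist_step_take)
qed

lemma hist_step_length: "length (hist_step n D c c' x) = length x"
  unfolding hist_step_def by (auto split: trans.splits sop.splits)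

lemma hist_length: "length (hist n D R x) = length x"
proof (induction R rule: induct_list012)
  case 1 then show ?case by (simp add: hist_def)
next
  case (2 c) then show ?case by simp
next
  case (3 c c' R) then show ?case by (simp add: hist_step_length)
qed

lemma hist_comp: "R1 \<noteq> [] \<Longrightarrow> R2 \<noteq> [] \<Longrightarrow> last R1 = hd R2 \<Longrightarrow>
   hist n D (comp_run R1 R2) x = hist n D R1 (hist n D R2 x)"
proof (induction R1 rule: induct_list012)
  case 1 then show ?case by simp
next
  case (2 c)
  then have "comp_run [c] R2 = R2" by (cases R2) (auto simp: comp_run_def)
  then show ?case by simp
next
  case (3 c c' R)
  have "comp_run (c # c' # R) R2 = c # comp_run (c' # R) R2" by (simp add: comp_run_def)
  moreover obtain R' where "comp_run (c' # R) R2 = c' # R'" by (simp add: comp_run_def)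
  ultimately show ?case using 3 by simp
qed

lemma hist_drop: "Suc s < length R \<Longrightarrow>
  hist n D (drop s R) x = hist_step n D (R ! s) (R ! Suc s) (hist n D (drop (Suc s) R) x)"
  by (simp add: Cons_nth_drop_Suc[symmetric])

lemma hist_kstack_lift: "P \<noteq> {} \<Longrightarrow> (\<forall>x\<in>P. take (n - k) x = t) \<Longrightarrow>
  hist_kstack n D k R P = Some (hist n D R t)"
  unfolding hist_kstack_def by (auto simp: hist_take)

lemma top_zeros_ne: "is_config n c \<Longrightarrow> top_zeros n k c \<noteq> {}"
  unfolding is_config_def top_zeros_def using G3 by blast

lemma hkl: "is_config n c \<Longrightarrow>
   hist_kstack n D k R (top_zeros n k c) = Some (hist n D R (take (n - k) (toppos (snd c))))"
  by (rule hist_kstack_lift[OF top_zeros_ne]) (auto simp: top_zeros_def)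

lemma upper_iff: "is_config n (last R) \<Longrightarrow>
  is_upper n D k R \<longleftrightarrow> hist n D R (take (n - k) (toppos (snd (last R)))) = take (n - k) (toppos (snd (hd R)))"
  unfolding is_upper_def by (simp add: hkl)

lemma hs_push: "step_of D c = Op p (Push r g) \<Longrightarrow> hist_step n D c c' y =
  (if take (Suc (n - r)) y = take (Suc (n - r)) (toppos (snd c')) then y[n - r := y ! (n - r) - 1] else y)"
  unfolding hist_step_def by simp

lemma hs_id: "step_of D c = Read f \<or> step_of D c = Op p (Pop r) \<Longrightarrow> hist_step n D c c' y = y"
  unfolding hist_step_def by auto

lemma succ_cases:
  assumes "successor n D c c'"
  obtains (rd) f where "step_of D c = Read f" "snd c' = snd c"
  | (pop) p r where "step_of D c = Op p (Pop r)" "pop_at (n - r) (snd c) = Some (snd c')"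
  | (push) p r g where "step_of D c = Op p (Push r g)" "push_at (n - r) g (snd c) = Some (snd c')"
  using assms unfolding successor_def
  by (cases "step_of D c"; cases "case step_of D c of Op p op \<Rightarrow> op") (auto split: sop.splits)

lemma push_cond_top:
  assumes pu: "push_at d g s = Some s'" and nc: "take (Suc d) y \<noteq> take (Suc d) (toppos s')"
    and eq: "y = take (length y) (toppos s')"
  shows "y = take (length y) (toppos s)"
proof -
  have "length y \<le> d"
  proof (rule ccontr)
    assume "\<not> length y \<le> d"
    then have "take (Suc d) y = take (Suc d) (toppos s')"
      by (subst eq) (simp add: min_def)
    with nc show False by simp
  qed
  then show ?thesis using eq Q1[OF pu] by simp
qed

lemma V_step: assumes su: "successor n D c c'" and v: "sub_at (snd c') y \<noteq> None"
  shows "sub_at (snd c) (hist_step n D c c' y) \<noteq> None"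
  using su
proof (cases rule: succ_cases)
  case (rd f) then show ?thesis using hs_id[of D c f] v by simp
next
  case (pop p r) then show ?thesis using hs_id[of D c _ p r] P2 v by metis
next
  case (push p r g)
  show ?thesis
  proof (cases "take (Suc (n - r)) y = take (Suc (n - r)) (toppos (snd c'))")
    case True
    then show ?thesis using Q3[OF push(2) True] v push(1) hs_push[of D c p r g n c' y]
      by (metis (no_types, lifting) option.map_disc_iff)
  next
    case False
    show ?thesis
    proof (cases "y = take (length y) (toppos (snd c'))")
      case True
      then have "y = take (length y) (toppos (snd c))" using push_cond_top[OF push(2) False] by simp
      then show ?thesis using G1[of "snd c" "length y"] False push(1) hs_push[of D c p r g n c' y] by auto
    next
      case F2: False
      then show ?thesis using Q2[OF push(2) v False F2] v False push(1) hs_push[of D c p r g n c' y] by auto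
    qed
  qed
qed

definition TT :: "nat \<Rightarrow> nat \<Rightarrow> ('q, 'g) config \<Rightarrow> nat list \<Rightarrow> nat list" where
  "TT n k c y = take (n - k) (y @ toppos (the (sub_at (snd c) y)))"

lemma TT_top: "m \<le> n - k \<Longrightarrow> TT n k c (take m (toppos (snd c))) = take (n - k) (toppos (snd c))"
  using G1[of "snd c" m] unfolding TT_def by (metis option.sel)

lemma SL:
  assumes su: "successor n D c c'" and v: "sub_at (snd c') y \<noteq> None"
    and len: "length y \<le> n - k"
    and nt: "hist_step n D c c' y \<noteq> take (length y) (toppos (snd c))"
  shows "hist_step n D c c' (TT n k c' y) = TT n k c (hist_step n D c c' y)"
  using su
proof (cases rule: succ_cases)
  case (rd f) then show ?thesis using hs_id[of D c f] by (simp add: TT_def)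
next
  case (pop p r)
  have h: "\<And>z. hist_step n D c c' z = z" using hs_id[of D c _ p r] pop(1) by metis
  have "sub_at (snd c') y = sub_at (snd c) y" using P1[OF pop(2) v] nt h by simp
  then show ?thesis using h by (simp add: TT_def)
next
  case (push p r g)
  define d where "d = n - r"
  have pu: "push_at d g (snd c) = Some (snd c')" using push d_def by simp
  have h: "\<And>z. hist_step n D c c' z =
     (if take (Suc d) z = take (Suc d) (toppos (snd c')) then z[d := z ! d - 1] else z)"
    using hs_push[OF push(1)] d_def by simp
  have ltp: "d < length (toppos (snd c'))" using Q0[OF pu] Q1[OF pu] by simp
  define w where "w = toppos (the (sub_at (snd c') y))"
  have TTc': "TT n k c' y = take (n - k) (y @ w)" by (simp add: TT_def w_def)
  show ?thesis
  proof (cases "take (Suc d) y = take (Suc d) (toppos (snd c'))")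
    case True
    have dl: "d < length y"
    proof (rule ccontr)
      assume "\<not> d < length y"
      then have "length (take (Suc d) y) < Suc d" by simp
      moreover have "length (take (Suc d) (toppos (snd c'))) = Suc d" using ltp by simp
      ultimately show False using True by simp
    qed
    have w: "toppos (the (sub_at (snd c) (y[d := y ! d - 1]))) = w"
      using Q3[OF pu True] v unfolding w_def by (metis option.map_sel option.map_disc_iff option.sel)
    have c1: "take (Suc d) (TT n k c' y) = take (Suc d) y"
      using dl len by (simp add: TTc' min_def)
    have c2: "take (n - k) (y @ w) ! d = y ! d" using dl len by (simp add: nth_append)
    have "hist_step n D c c' (TT n k c' y) = (take (n - k) (y @ w))[d := y ! d - 1]"
      using c1 True c2 by (simp add: h TTc')
    also have "\<dots> = take (n - k) ((y @ w)[d := y ! d - 1])" by (simp add: take_update_swap)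
    also have "\<dots> = take (n - k) (y[d := y ! d - 1] @ w)" using dl by (simp add: list_update_append1)
    also have "\<dots> = TT n k c (hist_step n D c c' y)" using True w by (simp add: h TT_def)
    finally show ?thesis .
  next
    case False
    have hy: "hist_step n D c c' y = y" using False h by simp
    have ny: "y \<noteq> take (length y) (toppos (snd c'))"
      using push_cond_top[OF pu False] nt hy by auto
    have eq: "sub_at (snd c') y = sub_at (snd c) y" using Q2[OF pu v False ny] .
    have "\<not> take (Suc d) (TT n k c' y) = take (Suc d) (toppos (snd c'))"
    proof
      assume a: "take (Suc d) (TT n k c' y) = take (Suc d) (toppos (snd c'))"
      show False
      proof (cases "Suc d \<le> length y")
        case True
        then have "take (Suc d) (TT n k c' y) = take (Suc d) y" using len by (simp add: TTc' min_def)
        then show False using a False by simp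
      next
        case F: False
        have "take (length y) (TT n k c' y) = y" using len by (simp add: TTc')
        moreover have "take (length y) (take (Suc d) (TT n k c' y)) = take (length y) (TT n k c' y)"
          using F by (simp add: min_def)
        moreover have "take (length y) (take (Suc d) (toppos (snd c'))) = take (length y) (toppos (snd c'))"
          using F by (simp add: min_def)
        ultimately show False using a ny by metis
      qed
    qed
    then show ?thesis using hy eq by (simp add: h TT_def)
  qed
qed

lemma upd_inj: "x[d := a] = x'[d := a'] \<Longrightarrow> length x = length x' \<Longrightarrow>
  (d < length x \<Longrightarrow> x ! d = x' ! d) \<Longrightarrow> x = x'"
  by (metis list_update_beyond list_update_id list_update_overwrite not_le_imp_less)

lemma IJ:
  assumes su: "successor n D c c'" and e: "hist_step n D c c' x = hist_step n D c c' x'"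
    and tm: "take m x = take m x'" and ll: "length x = length x'"
    and nt: "hist_step n D c c' (take m x) \<noteq> take m (toppos (snd c))"
  shows "x = x'"
  using su
proof (cases rule: succ_cases)
  case (rd f) then show ?thesis using hs_id[of D c f] e by simp
next
  case (pop p r)
  then show ?thesis using hs_id[of D c _ p r] e by metis
next
  case (push p r g)
  define d where "d = n - r"
  have pu: "push_at d g (snd c) = Some (snd c')" using push d_def by simp
  have h: "\<And>z. hist_step n D c c' z =
     (if take (Suc d) z = take (Suc d) (toppos (snd c')) then z[d := z ! d - 1] else z)"
    using hs_push[OF push(1)] d_def by simp
  have ltp: "d < length (toppos (snd c'))" using Q0[OF pu] Q1[OF pu] by simp
  have bad: False if a: "take (Suc d) z = take (Suc d) (toppos (snd c'))" and md: "m \<le> d"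
     and tz: "take m z = take m x" for z
  proof -
    have "take m z = take m (toppos (snd c'))" using a md
      by (metis min.absorb1 le_SucI take_take)
    also have "\<dots> = take m (toppos (snd c))" using Q1[OF pu] md by simp
    finally have "take m x = take m (toppos (snd c))" using tz by simp
    moreover have "hist_step n D c c' (take m x) = take m (hist_step n D c c' x)"
      by (simp add: hist_step_take)
    moreover have "take m (hist_step n D c c' x) = take m x" using md by (simp add: h)
    ultimately show False using nt by simp
  qed
  have same: "take (Suc d) x = take (Suc d) x'" if "take (Suc d) x = take (Suc d) (toppos (snd c'))"
    "take (Suc d) x' = take (Suc d) (toppos (snd c'))" using that by simp
  show ?thesis
  proof (cases "m \<le> d")
    case md: True
    show ?thesis
    proof (cases "take (Suc d) x = take (Suc d) (toppos (snd c'))";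
           cases "take (Suc d) x' = take (Suc d) (toppos (snd c'))")
      assume a: "take (Suc d) x = take (Suc d) (toppos (snd c'))"
         and b: "take (Suc d) x' = take (Suc d) (toppos (snd c'))"
      then have "x[d := x ! d - 1] = x'[d := x' ! d - 1]" using e h by simp
      moreover have "d < length x \<Longrightarrow> x ! d = x' ! d" using same[OF a b] ll
        by (metis lessI nth_take)
      ultimately show ?thesis using upd_inj ll by metis
    next
      assume "take (Suc d) x = take (Suc d) (toppos (snd c'))"
      then show ?thesis using bad md by blast
    next
      assume "take (Suc d) x' = take (Suc d) (toppos (snd c'))"
      then show ?thesis using bad md tm by metis
    next
      assume "take (Suc d) x \<noteq> take (Suc d) (toppos (snd c'))"
        "take (Suc d) x' \<noteq> take (Suc d) (toppos (snd c'))"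
      then show ?thesis using e h by simp
    qed
  next
    case False
    then have "take (Suc d) x = take (Suc d) x'" using tm
      by (metis min.absorb1 not_le Suc_leI take_take)
    then have cc: "(take (Suc d) x = take (Suc d) (toppos (snd c'))) =
                   (take (Suc d) x' = take (Suc d) (toppos (snd c')))" by simp
    show ?thesis
    proof (cases "take (Suc d) x = take (Suc d) (toppos (snd c'))")
      case True
      then have "x[d := x ! d - 1] = x'[d := x' ! d - 1]" using e h cc by simp
      moreover have "d < length x \<Longrightarrow> x ! d = x' ! d" using \<open>take (Suc d) x = take (Suc d) x'\<close> ll
        by (metis lessI nth_take)
      ultimately show ?thesis using upd_inj ll by metis
    next
      case False then show ?thesis using e h cc by simp
    qed
  qed
qed

lemma run_cons2: assumes a: "is_run n D (c # c' # R)"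
  shows "successor n D c c' \<and> is_run n D (c' # R)"
proof -
  have all: "\<forall>i. i + 1 < length (c # c' # R) \<longrightarrow> successor n D ((c # c' # R) ! i) ((c # c' # R) ! (i + 1))"
    using a unfolding is_run_def by blast
  have "successor n D c c'" using spec[OF all, of 0] by simp
  moreover have "\<forall>i. i + 1 < length (c' # R) \<longrightarrow> successor n D ((c' # R) ! i) ((c' # R) ! (i + 1))"
  proof (intro allI impI)
    fix i assume "i + 1 < length (c' # R)"
    then show "successor n D ((c' # R) ! i) ((c' # R) ! (i + 1))" using spec[OF all, of "Suc i"] by simp
  qed
  then have "is_run n D (c' # R)" using a unfolding is_run_def by simp
  ultimately show ?thesis by simp
qed

lemma run_drop: "is_run n D R \<Longrightarrow> s < length R \<Longrightarrow> is_run n D (drop s R)"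
  unfolding is_run_def by (auto dest: in_set_dropD simp: add.commute add.left_commute)

lemma run_take: "is_run n D R \<Longrightarrow> 0 < j \<Longrightarrow> is_run n D (take j R)"
  unfolding is_run_def by (auto dest: in_set_takeD)

lemma run_last: "is_run n D R \<Longrightarrow> is_config n (last R)"
  unfolding is_run_def by auto

lemma run_nth: "is_run n D R \<Longrightarrow> i < length R \<Longrightarrow> is_config n (R ! i)"
  unfolding is_run_def by auto

lemma cfg_len: "is_config n c \<Longrightarrow> length (toppos (snd c)) = n"
  unfolding is_config_def using G2 by blast

lemma cfg_valid: "sub_at (snd c) (take j (toppos (snd c))) \<noteq> None"
  using G1[of "snd c" j] by auto

lemma hist_valid: "is_run n D R \<Longrightarrow> sub_at (snd (last R)) y \<noteq> None \<Longrightarrow>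
  sub_at (snd (hd R)) (hist n D R y) \<noteq> None"
proof (induction R rule: induct_list012)
  case 1 then show ?case by (simp add: is_run_def)
next
  case (2 c) then show ?case by simp
next
  case (3 c c' R)
  then show ?case using run_cons2[OF 3(3)] V_step by fastforce
qed

lemma RET:
  assumes "is_run n D R" and mk: "m \<le> n - k"
    and "\<forall>i < rlen R. hist n D (drop i R) (take m (toppos (snd (last R)))) \<noteq> take m (toppos (snd (R ! i)))"
  shows "TT n k (hd R) (hist n D R (take m (toppos (snd (last R))))) =
         hist n D R (take (n - k) (toppos (snd (last R))))"
  using assms
proof (induction R rule: induct_list012)
  case 1 then show ?case by (simp add: is_run_def)
next
  case (2 c) then show ?case by (simp add: TT_top)
next
  case (3 c c' R)
  let ?l = "last (c' # R)"
  let ?y = "hist n D (c' # R) (take m (toppos (snd ?l)))"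
  have su: "successor n D c c'" and ru: "is_run n D (c' # R)" using run_cons2[OF 3(3)] by auto
  have IH: "TT n k c' ?y = hist n D (c' # R) (take (n - k) (toppos (snd ?l)))"
    using 3(2)[OF ru mk] 3(5) by (fastforce)
  have v: "sub_at (snd c') ?y \<noteq> None" using hist_valid[OF ru cfg_valid] by simp
  have ln: "length (toppos (snd ?l)) = n" using cfg_len run_last[OF ru] by blast
  have ly: "length ?y = m" using ln mk by (simp add: hist_length)
  have nt: "hist_step n D c c' ?y \<noteq> take (length ?y) (toppos (snd c))"
    using 3(5) ly by (auto elim: allE[where x=0])
  have lst: "last (c # c' # R) = ?l" by simp
  have "TT n k c (hist_step n D c c' ?y) = hist_step n D c c' (TT n k c' ?y)"
    using SL[OF su v _ nt] ly mk by simp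
  then show ?case unfolding lst hist_cons2 list.sel(1) using IH by simp
qed

lemma TT_len: assumes "is_config n c" "sub_at (snd c) y \<noteq> None" "length y \<le> n"
  shows "length (TT n k c y) = n - k"
proof -
  obtain u where u: "sub_at (snd c) y = Some u" using assms(2) by auto
  have "is_stack (n - length y) u \<and> nonempty_stack (n - length y) u"
    using G2'[OF _ _ u] assms(1) unfolding is_config_def by blast
  then have "length (toppos u) = n - length y" using G2 by blast
  then show ?thesis using u assms(3) by (simp add: TT_def)
qed

lemma FWD:
  assumes "is_run n D R" and mk: "m \<le> n - k"
    and "TT n k (hd R) (hist n D R (take m (toppos (snd (last R))))) =
         hist n D R (take (n - k) (toppos (snd (last R))))"
    and "\<forall>i < rlen R. hist n D (drop i R) (take (n - k) (toppos (snd (last R)))) \<noteq> take (n - k) (toppos (snd (R ! i)))"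
  shows "\<forall>i < rlen R. hist n D (drop i R) (take m (toppos (snd (last R)))) \<noteq> take m (toppos (snd (R ! i)))"
  using assms
proof (induction R rule: induct_list012)
  case 1 then show ?case by (simp add: is_run_def)
next
  case (2 c) then show ?case by simp
next
  case (3 c c' R)
  let ?l = "last (c' # R)"
  let ?y = "hist n D (c' # R) (take m (toppos (snd ?l)))"
  let ?a = "hist n D (c' # R) (take (n - k) (toppos (snd ?l)))"
  have lst: "last (c # c' # R) = ?l" by simp
  have su: "successor n D c c'" and ru: "is_run n D (c' # R)" using run_cons2[OF 3(3)] by auto
  have v: "sub_at (snd c') ?y \<noteq> None" using hist_valid[OF ru cfg_valid] by simp
  have ln: "length (toppos (snd ?l)) = n" using cfg_len run_last[OF ru] by blast
  have ly: "length ?y = m" using ln mk by (simp add: hist_length)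
  have la: "length ?a = n - k" using ln by (simp add: hist_length)
  have inv: "TT n k c (hist_step n D c c' ?y) = hist_step n D c c' ?a"
    using 3(5) unfolding lst by simp
  have nup0: "hist_step n D c c' ?a \<noteq> take (n - k) (toppos (snd c))"
    using 3(6) unfolding lst by (auto elim: allE[where x=0])
  have c0: "hist_step n D c c' ?y \<noteq> take m (toppos (snd c))"
  proof
    assume "hist_step n D c c' ?y = take m (toppos (snd c))"
    then have "TT n k c (hist_step n D c c' ?y) = take (n - k) (toppos (snd c))" using TT_top mk by simp
    then show False using inv nup0 by simp
  qed
  have cc': "is_config n c'" using run_nth[OF ru, of 0] by simp
  have inv': "TT n k c' ?y = ?a"
  proof (rule IJ[OF su, where m=m])
    show "hist_step n D c c' (TT n k c' ?y) = hist_step n D c c' ?a"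
      using SL[OF su v _ ] c0 ly mk inv by simp
    have "take m (TT n k c' ?y) = ?y" using ly mk by (simp add: TT_def)
    moreover have "take m ?a = ?y" using mk by (simp add: hist_take min_def)
    ultimately show "take m (TT n k c' ?y) = take m ?a" by simp
    show "length (TT n k c' ?y) = length ?a" using TT_len[OF cc' v] ly mk la by simp
    show "hist_step n D c c' (take m (TT n k c' ?y)) \<noteq> take m (toppos (snd c))"
      using \<open>take m (TT n k c' ?y) = ?y\<close> c0 by simp
  qed
  have IH: "\<forall>i < rlen (c' # R). hist n D (drop i (c' # R)) (take m (toppos (snd ?l))) \<noteq> take m (toppos (snd ((c' # R) ! i)))"
  proof (rule 3(2)[OF ru mk])
    show "TT n k (hd (c' # R)) ?y = ?a" using inv' by simp
    show "\<forall>i < rlen (c' # R). hist n D (drop i (c' # R)) (take (n - k) (toppos (snd ?l))) \<noteq> take (n - k) (toppos (snd ((c' # R) ! i)))"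
    proof (intro allI impI)
      fix i assume "i < rlen (c' # R)"
      then show "hist n D (drop i (c' # R)) (take (n - k) (toppos (snd ?l))) \<noteq> take (n - k) (toppos (snd ((c' # R) ! i)))"
        using spec[OF 3(6), of "Suc i"] unfolding lst by simp
    qed
  qed
  show ?case
  proof (intro allI impI)
    fix i assume i: "i < rlen (c # c' # R)"
    show "hist n D (drop i (c # c' # R)) (take m (toppos (snd (last (c # c' # R))))) \<noteq> take m (toppos (snd ((c # c' # R) ! i)))"
    proof (cases i)
      case 0 then show ?thesis using c0 unfolding lst by simp
    next
      case (Suc j) then show ?thesis using spec[OF IH, of j] i unfolding lst by simp
    qed
  qed
qed

lemma L_ne: assumes pu: "push_at d g s = Some s'"
  shows "take (Suc d) (toppos s) \<noteq> take (Suc d) (toppos s')"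
proof
  assume a: "take (Suc d) (toppos s) = take (Suc d) (toppos s')"
  have d: "d < length (toppos s)" using Q0[OF pu] .
  have "take (Suc d) (toppos s) ! d = toppos s ! d" by simp
  moreover have "take (Suc d) (toppos s') ! d = toppos s ! d + 1" using Q1[OF pu] d by simp
  ultimately show False using a by simp
qed

lemma PUSHL: assumes pu: "push_at d g (snd c0) = Some (snd c1)" and dk: "Suc d \<le> n - k"
  and v: "sub_at (snd c1) (take (Suc d) (toppos (snd c0))) \<noteq> None"
  shows "TT n k c1 (take (Suc d) (toppos (snd c0))) = take (n - k) (toppos (snd c0))"
proof -
  let ?L = "take (Suc d) (toppos (snd c0))"
  have d: "d < length (toppos (snd c0))" using Q0[OF pu] .
  have ne: "take (Suc d) ?L \<noteq> take (Suc d) (toppos (snd c1))" using L_ne[OF pu] by simp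
  have lL: "length ?L = Suc d" using d by simp
  have ne2: "?L \<noteq> take (length ?L) (toppos (snd c1))" using L_ne[OF pu] unfolding lL by simp
  have "sub_at (snd c1) ?L = sub_at (snd c0) ?L" using Q2[OF pu v ne ne2] .
  then have "TT n k c1 ?L = TT n k c0 ?L" by (simp add: TT_def)
  then show ?thesis using TT_top dk by simp
qed

lemma POPBAD:
  assumes pp: "pop_at (n - r) (snd c0) = Some (snd c1)" and rk: "k < r" and rn: "r \<le> n"
    and v: "sub_at (snd c1) A \<noteq> None" and eq: "A = take (n - k) (toppos (snd c0))"
  shows False
proof -
  have "Suc (n - r) \<le> n - k" using rk rn by arith
  then have "take (Suc (n - r)) A = take (Suc (n - r)) (toppos (snd c0))" using eq by (simp add: min_def)
  then have "A = take (Suc (n - r)) (toppos (snd c0)) @ drop (Suc (n - r)) A" by (metis append_take_drop_id)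
  then show False using P4[OF pp] sub_at_append_None v by metis
qed

lemma return_iff:
  assumes ru: "is_run n D R" and r: "1 \<le> r" "r \<le> n"
  shows "is_return n D r R \<longleftrightarrow>
    (\<exists>s'. pop_at (n - r) (snd (hd R)) = Some s' \<and>
       hist n D R (take (Suc (n - r)) (toppos (snd (last R)))) = take (Suc (n - r)) (toppos s')) \<and>
    (\<forall>i < rlen R. hist n D (drop i R) (take (Suc (n - r)) (toppos (snd (last R)))) \<noteq>
        take (Suc (n - r)) (toppos (snd (R ! i))))"
proof -
  have nr: "n - (r - 1) = Suc (n - r)" using r by simp
  have nr2: "Suc n - r = Suc (n - r)" using r by simp
  have nr3: "n - (r - Suc 0) = Suc (n - r)" using r by simp
  have up: "is_upper n D (r - 1) (drop i R) \<longleftrightarrow>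
     hist n D (drop i R) (take (Suc (n - r)) (toppos (snd (last R)))) = take (Suc (n - r)) (toppos (snd (R ! i)))"
    if "i < rlen R" for i
  proof -
    have i: "i < length R" using that by simp
    have "last (drop i R) = last R" using i by simp
    moreover have "hd (drop i R) = R ! i" using i by (simp add: hd_drop_conv_nth)
    ultimately show ?thesis using upper_iff[of n "drop i R" D "r - 1"] run_last[OF ru] nr by (simp add: nr2)
  qed
  have hk: "hist_kstack n D (r - 1) R (top_zeros n (r - 1) (last R)) =
     Some (hist n D R (take (Suc (n - r)) (toppos (snd (last R)))))"
    using hkl[OF run_last[OF ru], of D "r - 1" R] nr by (simp add: nr2)
  show ?thesis unfolding is_return_def hk using up by (auto simp: nr3)
qed

lemma dpda_ord: "is_dpda n D \<Longrightarrow> step_of D c = Op p op \<Longrightarrow> 1 \<le> op_order op \<and> op_order op \<le> n"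
  unfolding is_dpda_def step_of_def by blast

lemma len2: "length R = 2 \<Longrightarrow> \<exists>a b. R = [a, b]"
  by (cases R; cases "tl R"; auto simp: length_Suc_conv)

lemma run2: "is_run n D [c0, c1] \<Longrightarrow> successor n D c0 c1"
  using run_cons2 by blast

lemma push_up:
  assumes pu: "push_at (n - r) g (snd c0) = Some (snd c1)" and st: "step_of D c0 = Op p (Push r g)"
  shows "hist_step n D c0 c1 (take m (toppos (snd c1))) = take m (toppos (snd c0))"
proof -
  have d: "n - r < length (toppos (snd c0))" using Q0[OF pu] .
  have "hist_step n D c0 c1 (toppos (snd c1)) = toppos (snd c0)"
    using hs_push[OF st] Q1[OF pu] d by simp
  then show ?thesis by (metis hist_step_take)
qed

lemma one_step_upper:
  assumes ru: "is_run n D [c0, c1]" and dp: "is_dpda n D"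
    and st: "(\<exists>f. step_of D c0 = Read f) \<or> (\<exists>p r g. step_of D c0 = Op p (Push r g))
            \<or> (\<exists>p r. r \<le> k \<and> step_of D c0 = Op p (Pop r))"
  shows "is_upper n D k [c0, c1]"
proof -
  have su: "successor n D c0 c1" using run2[OF ru] .
  have cf: "is_config n c1" using run_last[OF ru] by simp
  have "hist_step n D c0 c1 (take (n - k) (toppos (snd c1))) = take (n - k) (toppos (snd c0))"
    using su
  proof (cases rule: succ_cases)
    case (rd f) then show ?thesis using hs_id[of D c0 f] by simp
  next
    case (pop p r)
    then have rk: "r \<le> k" using st by auto
    have "take (n - r) (toppos (snd c1)) = take (n - r) (toppos (snd c0))" using P3[OF pop(2)] .
    moreover have "n - k \<le> n - r" using rk by simp
    ultimately have "take (n - k) (take (n - r) (toppos (snd c1))) = take (n - k) (take (n - r) (toppos (snd c0)))"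
      by simp
    then have "take (n - k) (toppos (snd c1)) = take (n - k) (toppos (snd c0))" using \<open>n - k \<le> n - r\<close>
      by (simp add: min_def)
    moreover have "hist_step n D c0 c1 z = z" for z using hs_id[of D c0 _ p r n c1 z] pop(1) by blast
    ultimately show ?thesis by simp
  next
    case (push p r g) then show ?thesis using push_up[OF push(2) push(1)] by blast
  qed
  moreover have cf': "is_config n (last [c0, c1])" using cf by simp
  ultimately show ?thesis using upper_iff[OF cf', of D k] by simp
qed

lemma BACK:
  fixes D :: "('q, 'g, 'a) dpda"
  assumes dp: "is_dpda n D" and kn: "k \<le> n" and ru: "is_run n D R"
    and H: "rlen R = 0
      \<or> (rlen R = 1 \<and>
           ((\<exists>f. step_of D (R ! 0) = Read f)
            \<or> (\<exists>p r g. step_of D (R ! 0) = Op p (Push r g))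
            \<or> (\<exists>p r. r \<le> k \<and> step_of D (R ! 0) = Op p (Pop r))))
      \<or> (0 < rlen R \<and>
           (\<exists>p r g. k + 1 \<le> r \<and> step_of D (R ! 0) = Op p (Push r g)
                   \<and> is_return n D r (drop 1 R)))
      \<or> (\<exists>R1 R2. is_run n D R1 \<and> is_run n D R2 \<and> 0 < rlen R1 \<and> 0 < rlen R2
                 \<and> is_upper n D k R1 \<and> is_upper n D k R2
                 \<and> last R1 = hd R2 \<and> R = comp_run R1 R2)"
  shows "is_upper n D k R"
proof -
  have Rne: "R \<noteq> []" using ru by (simp add: is_run_def)
  have cl: "is_config n (last R)" using run_last[OF ru] .
  from H show ?thesis
  proof (elim disjE)
    assume "rlen R = 0"
    then obtain c where "R = [c]" using Rne by (cases R) auto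
    then show ?thesis using upper_iff[OF cl] by simp
  next
    assume "rlen R = 1 \<and> ((\<exists>f. step_of D (R ! 0) = Read f)
            \<or> (\<exists>p r g. step_of D (R ! 0) = Op p (Push r g))
            \<or> (\<exists>p r. r \<le> k \<and> step_of D (R ! 0) = Op p (Pop r)))"
    then have l: "rlen R = 1" and st: "(\<exists>f. step_of D (R ! 0) = Read f)
            \<or> (\<exists>p r g. step_of D (R ! 0) = Op p (Push r g))
            \<or> (\<exists>p r. r \<le> k \<and> step_of D (R ! 0) = Op p (Pop r))" by auto
    have "length R = 2" using l Rne by (cases R) auto
    then obtain a b where R: "R = [a, b]" using len2[of R] by blast
    show ?thesis using one_step_upper[of n D a b k] ru dp st unfolding R by simp
  next
    assume "0 < rlen R \<and>
           (\<exists>p r g. k + 1 \<le> r \<and> step_of D (R ! 0) = Op p (Push r g)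
                   \<and> is_return n D r (drop 1 R))"
    then obtain p r g where l: "0 < rlen R" and rk: "k + 1 \<le> r" and st: "step_of D (R ! 0) = Op p (Push r g)"
      and ret: "is_return n D r (drop 1 R)" by blast
    obtain c0 c1 R'' where R: "R = c0 # c1 # R''" using l Rne
      by (cases R; cases "tl R") auto
    have su: "successor n D c0 c1" and ru': "is_run n D (c1 # R'')" using run_cons2[of n D c0 c1 R''] ru R by auto
    have st0: "step_of D c0 = Op p (Push r g)" using st R by simp
    have rn: "1 \<le> r \<and> r \<le> n" using dpda_ord[OF dp st0] by simp
    have pu: "push_at (n - r) g (snd c0) = Some (snd c1)"
      using su st0 unfolding successor_def by simp
    have dR: "drop 1 R = c1 # R''" using R by simp
    let ?l = "last (c1 # R'')"
    have lR: "last R = ?l" using R by simp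
    obtain s' where pp: "pop_at (n - r) (snd c1) = Some s'"
      and hb: "hist n D (c1 # R'') (take (Suc (n - r)) (toppos (snd ?l))) = take (Suc (n - r)) (toppos s')"
      and suf: "\<forall>i < rlen (c1 # R''). hist n D (drop i (c1 # R'')) (take (Suc (n - r)) (toppos (snd ?l))) \<noteq>
        take (Suc (n - r)) (toppos (snd ((c1 # R'') ! i)))"
      using ret[unfolded dR return_iff[OF ru' conjunct1[OF rn] conjunct2[OF rn]]] by auto
    have s': "s' = snd c0" using pp Q4[OF pu] by simp
    have mk: "Suc (n - r) \<le> n - k" using rk rn by arith
    have RT: "TT n k c1 (hist n D (c1 # R'') (take (Suc (n - r)) (toppos (snd ?l)))) =
         hist n D (c1 # R'') (take (n - k) (toppos (snd ?l)))"
      using RET[OF ru' mk suf] by simp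
    have v: "sub_at (snd c1) (take (Suc (n - r)) (toppos (snd c0))) \<noteq> None"
      using hist_valid[OF ru' cfg_valid[of ?l "Suc (n - r)"]] hb s' by (simp del: last.simps)
    have A1: "hist n D (c1 # R'') (take (n - k) (toppos (snd ?l))) = take (n - k) (toppos (snd c0))"
      using RT PUSHL[OF pu mk v] hb s' by simp
    have nc: "take (Suc (n - r)) (take (n - k) (toppos (snd c0))) \<noteq> take (Suc (n - r)) (toppos (snd c1))"
      using L_ne[OF pu] mk by (simp add: min_def)
    have "hist n D R (take (n - k) (toppos (snd (last R)))) = take (n - k) (toppos (snd c0))"
      unfolding lR unfolding R hist_cons2 A1 using hs_push[OF st0] nc by simp
    then show ?thesis using upper_iff[OF cl, of D k] R by simp
  next
    assume "\<exists>R1 R2. is_run n D R1 \<and> is_run n D R2 \<and> 0 < rlen R1 \<and> 0 < rlen R2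
                 \<and> is_upper n D k R1 \<and> is_upper n D k R2
                 \<and> last R1 = hd R2 \<and> R = comp_run R1 R2"
    then obtain R1 R2 where r1: "is_run n D R1" and r2: "is_run n D R2" and l1: "0 < rlen R1" and l2: "0 < rlen R2"
      and u1: "is_upper n D k R1" and u2: "is_upper n D k R2" and lh: "last R1 = hd R2"
      and R: "R = comp_run R1 R2" by blast
    have ne1: "R1 \<noteq> []" and ne2: "R2 \<noteq> []" using l1 l2 by auto
    have tl2: "tl R2 \<noteq> []" using l2 by (cases R2) auto
    have lR: "last R = last R2" using R tl2 by (simp add: comp_run_def last_tl)
    have hR: "hd R = hd R1" using R ne1 by (simp add: comp_run_def)
    have e2: "hist n D R2 (take (n - k) (toppos (snd (last R2)))) = take (n - k) (toppos (snd (hd R2)))"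
      using u2 upper_iff[OF run_last[OF r2], of D k] by blast
    have e1: "hist n D R1 (take (n - k) (toppos (snd (last R1)))) = take (n - k) (toppos (snd (hd R1)))"
      using u1 upper_iff[OF run_last[OF r1], of D k] by blast
    have "hist n D R (take (n - k) (toppos (snd (last R)))) = take (n - k) (toppos (snd (hd R)))"
    proof -
      have "hist n D R (take (n - k) (toppos (snd (last R)))) =
        hist n D R1 (hist n D R2 (take (n - k) (toppos (snd (last R2)))))"
        using hist_comp[OF ne1 ne2 lh, of n D] R lR by simp
      then show ?thesis using e1 e2 lh hR by simp
    qed
    then show ?thesis using upper_iff[OF cl, of D k] by simp
  qed
qed

lemma FORW:
  fixes D :: "('q, 'g, 'a) dpda"
  assumes dp: "is_dpda n D" and kn: "k \<le> n" and ru: "is_run n D R" and up: "is_upper n D k R"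
  shows "rlen R = 0
      \<or> (rlen R = 1 \<and>
           ((\<exists>f. step_of D (R ! 0) = Read f)
            \<or> (\<exists>p r g. step_of D (R ! 0) = Op p (Push r g))
            \<or> (\<exists>p r. r \<le> k \<and> step_of D (R ! 0) = Op p (Pop r))))
      \<or> (0 < rlen R \<and>
           (\<exists>p r g. k + 1 \<le> r \<and> step_of D (R ! 0) = Op p (Push r g)
                   \<and> is_return n D r (drop 1 R)))
      \<or> (\<exists>R1 R2. is_run n D R1 \<and> is_run n D R2 \<and> 0 < rlen R1 \<and> 0 < rlen R2
                 \<and> is_upper n D k R1 \<and> is_upper n D k R2
                 \<and> last R1 = hd R2 \<and> R = comp_run R1 R2)"
proof (cases "rlen R = 0")
  case True then show ?thesis by simp
next
  case False
  have Rne: "R \<noteq> []" using ru by (simp add: is_run_def)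
  have cl: "is_config n (last R)" using run_last[OF ru] .
  let ?Al = "take (n - k) (toppos (snd (last R)))"
  have e: "hist n D R ?Al = take (n - k) (toppos (snd (hd R)))" using up upper_iff[OF cl, of D k] by blast
  obtain c0 c1 R'' where R: "R = c0 # c1 # R''" using False Rne by (cases R; cases "tl R") auto
  have su: "successor n D c0 c1" and ru': "is_run n D (c1 # R'')" using run_cons2[of n D c0 c1 R''] ru R by auto
  let ?l = "last (c1 # R'')"
  have lR: "last R = ?l" using R by simp
  define A1 where "A1 = hist n D (c1 # R'') ?Al"
  have hA1: "hist_step n D c0 c1 A1 = take (n - k) (toppos (snd c0))"
    using e unfolding A1_def using R by simp
  have vA1: "sub_at (snd c1) A1 \<noteq> None"
    unfolding A1_def lR using hist_valid[OF ru' cfg_valid[of ?l "n - k"]] by (simp del: last.simps)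
  have ln: "length (toppos (snd (last R))) = n" using cfg_len cl by blast
  have lA1: "length A1 = n - k" unfolding A1_def using ln by (simp add: hist_length)
  have c1cfg: "is_config n c1" using run_nth[OF ru', of 0] by simp
  have c0cfg: "is_config n c0" using run_nth[OF ru, of 0] R by simp
  have l0: "length (toppos (snd c0)) = n" using cfg_len c0cfg by blast
  show ?thesis
  proof (cases "R'' = []")
    case True
    have A1t: "A1 = take (n - k) (toppos (snd c1))" unfolding A1_def using True R by simp
    have "(\<exists>f. step_of D c0 = Read f)
            \<or> (\<exists>p r g. step_of D c0 = Op p (Push r g))
            \<or> (\<exists>p r. r \<le> k \<and> step_of D c0 = Op p (Pop r))"
      using su
    proof (cases rule: succ_cases)
      case (rd f) then show ?thesis by blast
    next
      case (push p r g) then show ?thesis by blast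
    next
      case (pop p r)
      have rn: "r \<le> n" using dpda_ord[OF dp pop(1)] by simp
      have hid: "hist_step n D c0 c1 A1 = A1" using hs_id[of D c0 _ p r] pop(1) by blast
      show ?thesis
      proof (cases "r \<le> k")
        case True then show ?thesis using pop by blast
      next
        case False
        then have "k < r" by simp
        then show ?thesis using POPBAD[OF pop(2) _ rn vA1] hid hA1 by metis
      qed
    qed
    then show ?thesis using R True by simp
  next
    case False
    show ?thesis
    proof (cases "\<exists>j. 1 \<le> j \<and> j < rlen R \<and> hist n D (drop j R) ?Al = take (n - k) (toppos (snd (R ! j)))")
      case True
      then obtain j where j: "1 \<le> j" "j < rlen R" and ej: "hist n D (drop j R) ?Al = take (n - k) (toppos (snd (R ! j)))"
        by blast
      define R1 where "R1 = take (Suc j) R"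
      define R2 where "R2 = drop j R"
      have r1: "is_run n D R1" unfolding R1_def using run_take[OF ru] by simp
      have r2: "is_run n D R2" unfolding R2_def using run_drop[OF ru] j by simp
      have l1: "0 < rlen R1" "0 < rlen R2" unfolding R1_def R2_def using j by auto
      have lt: "last (take (Suc j) R) = R ! j"
      proof -
        have "take (Suc j) R \<noteq> []" using Rne by simp
        then have "last (take (Suc j) R) = take (Suc j) R ! (length (take (Suc j) R) - 1)" by (rule last_conv_nth)
        also have "length (take (Suc j) R) - 1 = j" using j by simp
        finally show ?thesis by simp
      qed
      have lh: "last R1 = hd R2" unfolding R1_def R2_def using j lt
        by (simp add: hd_drop_conv_nth)
      have hd2: "hd R2 = R ! j" unfolding R2_def using j by (simp add: hd_drop_conv_nth)
      have comp: "R = comp_run R1 R2" unfolding R1_def R2_def comp_run_def using j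
        by (metis append_take_drop_id drop_Suc tl_drop)
      have ne1: "R1 \<noteq> []" and ne2: "R2 \<noteq> []" using l1 by auto
      have last2: "last R2 = last R" unfolding R2_def using j by simp
      have hd1: "hd R1 = hd R" unfolding R1_def using Rne by simp
      have u2: "is_upper n D k R2"
        using upper_iff[OF run_last[OF r2], of D k] ej last2 hd2 unfolding R2_def[symmetric] by simp
      have "hist n D R1 (take (n - k) (toppos (snd (last R1)))) = hist n D R1 (hist n D R2 ?Al)"
        using ej lh hd2 unfolding R2_def[symmetric] by simp
      also have "\<dots> = hist n D R ?Al" using hist_comp[OF ne1 ne2 lh, of n D] comp by simp
      finally have "hist n D R1 (take (n - k) (toppos (snd (last R1)))) = take (n - k) (toppos (snd (hd R1)))"
        using e hd1 by simp
      then have u1: "is_upper n D k R1" using upper_iff[OF run_last[OF r1], of D k] by blast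
      show ?thesis using r1 r2 l1 u1 u2 lh comp by blast
    next
      case nj: False
      have nA1: "A1 \<noteq> take (n - k) (toppos (snd c1))"
        using nj False R unfolding A1_def by (auto elim!: allE[where x=1])
      obtain p r g where st0: "step_of D c0 = Op p (Push r g)" and pu: "push_at (n - r) g (snd c0) = Some (snd c1)"
        and rk: "k < r"
        using su
      proof (cases rule: succ_cases)
        case (rd f)
        then show ?thesis using hs_id[of D c0 f _ _ n c1 A1] hA1 nA1 by simp
      next
        case (pop p r)
        have rn: "r \<le> n" using dpda_ord[OF dp pop(1)] by simp
        have hid: "hist_step n D c0 c1 A1 = A1" using hs_id[of D c0 _ p r] pop(1) by blast
        show ?thesis
        proof (cases "r \<le> k")
          case True
          have "take (n - r) (toppos (snd c1)) = take (n - r) (toppos (snd c0))" using P3[OF pop(2)] .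
          moreover have "n - k \<le> n - r" using True by simp
          ultimately have "take (n - k) (take (n - r) (toppos (snd c1))) = take (n - k) (take (n - r) (toppos (snd c0)))"
            by simp
          then have "take (n - k) (toppos (snd c1)) = take (n - k) (toppos (snd c0))" using \<open>n - k \<le> n - r\<close>
            by (simp add: min_def)
          then show ?thesis using hid hA1 nA1 by simp
        next
          case False
          then have "k < r" by simp
          then show ?thesis using POPBAD[OF pop(2) _ rn vA1] hid hA1 by metis
        qed
      next
        case (push p r g)
        show ?thesis
        proof (cases "r \<le> k")
          case True
          have h: "hist_step n D c0 c1 A1 = A1"
          proof -
            have "length (take (Suc (n - r)) A1) < Suc (n - r)" using lA1 True by simp
            moreover have "length (take (Suc (n - r)) (toppos (snd c1))) = Suc (n - r)"
              using Q0[OF push(2)] Q1[OF push(2)] by simp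
            ultimately show ?thesis using hs_push[OF push(1)] by auto
          qed
          have "take (n - k) (toppos (snd c1)) = take (n - k) (toppos (snd c0))"
            using Q1[OF push(2)] True by simp
          then show ?thesis using h hA1 nA1 by simp
        next
          case False then show ?thesis using push that by simp
        qed
      qed
      define d where "d = n - r"
      have rn: "r \<le> n" using dpda_ord[OF dp st0] by simp
      have mk: "Suc d \<le> n - k" using rk rn d_def by arith
      have pu': "push_at d g (snd c0) = Some (snd c1)" using pu d_def by simp
      have dl: "d < length (toppos (snd c0))" using Q0[OF pu'] .
      have h: "\<And>z. hist_step n D c0 c1 z =
         (if take (Suc d) z = take (Suc d) (toppos (snd c1)) then z[d := z ! d - 1] else z)"
        using hs_push[OF st0] d_def by simp
      have ncond: "take (Suc d) A1 \<noteq> take (Suc d) (toppos (snd c1))"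
      proof
        assume cnd: "take (Suc d) A1 = take (Suc d) (toppos (snd c1))"
        then have hh: "A1[d := A1 ! d - 1] = take (n - k) (toppos (snd c0))" using h hA1 by simp
        have "A1 ! d = toppos (snd c1) ! d" using cnd mk lA1 by (metis lessI nth_take)
        also have "\<dots> = toppos (snd c0) ! d + 1" using Q1[OF pu'] dl by simp
        finally have ad: "A1 ! d = toppos (snd c0) ! d + 1" .
        have "A1 = (A1[d := A1 ! d - 1])[d := A1 ! d]" by simp
        also have "\<dots> = (take (n - k) (toppos (snd c0)))[d := toppos (snd c0) ! d + 1]" using hh ad by simp
        also have "\<dots> = take (n - k) (toppos (snd c1))" using Q1[OF pu'] by (simp add: take_update_swap)
        finally show False using nA1 by simp
      qed
      have A1e: "A1 = take (n - k) (toppos (snd c0))" using h ncond hA1 by simp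
      let ?Bl = "take (Suc d) (toppos (snd ?l))"
      have lR': "last R = ?l" using lR .
      have hB: "hist n D (c1 # R'') ?Bl = take (Suc d) (toppos (snd c0))"
      proof -
        have "?Bl = take (Suc d) ?Al" using mk lR by (simp add: min_def)
        then have "hist n D (c1 # R'') ?Bl = take (Suc d) A1" unfolding A1_def by (simp add: hist_take)
        then show ?thesis using A1e mk by (simp add: min_def)
      qed
      have vB: "sub_at (snd c1) (take (Suc d) (toppos (snd c0))) \<noteq> None"
      proof -
        have "A1 = take (Suc d) (toppos (snd c0)) @ drop (Suc d) A1" using A1e mk
          by (metis append_take_drop_id min.absorb1 take_take)
        then show ?thesis using vA1 sub_at_append_None by metis
      qed
      have inv: "TT n k (hd (c1 # R'')) (hist n D (c1 # R'') ?Bl) = hist n D (c1 # R'') (take (n - k) (toppos (snd ?l)))"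
        using PUSHL[OF pu' mk vB] hB A1e lR unfolding A1_def by simp
      have nup: "\<forall>i < rlen (c1 # R''). hist n D (drop i (c1 # R'')) (take (n - k) (toppos (snd ?l))) \<noteq>
           take (n - k) (toppos (snd ((c1 # R'') ! i)))"
      proof (intro allI impI)
        fix i assume i: "i < rlen (c1 # R'')"
        have "\<not> (1 \<le> Suc i \<and> Suc i < rlen R \<and> hist n D (drop (Suc i) R) ?Al = take (n - k) (toppos (snd (R ! Suc i))))"
          using nj by blast
        then show "hist n D (drop i (c1 # R'')) (take (n - k) (toppos (snd ?l))) \<noteq>
           take (n - k) (toppos (snd ((c1 # R'') ! i)))" using i R lR by simp
      qed
      have suf: "\<forall>i < rlen (c1 # R''). hist n D (drop i (c1 # R'')) ?Bl \<noteq> take (Suc d) (toppos (snd ((c1 # R'') ! i)))"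
        using FWD[OF ru' mk inv nup] .
      have r1: "1 \<le> r" using rk by simp
      have ret: "is_return n D r (c1 # R'')"
        unfolding return_iff[OF ru' r1 rn]
      proof (intro conjI exI)
        show "pop_at (n - r) (snd (hd (c1 # R''))) = Some (snd c0)" using Q4[OF pu] by simp
        show "hist n D (c1 # R'') (take (Suc (n - r)) (toppos (snd (last (c1 # R''))))) =
              take (Suc (n - r)) (toppos (snd c0))" using hB d_def by simp
        show "\<forall>i<rlen (c1 # R''). hist n D (drop i (c1 # R'')) (take (Suc (n - r)) (toppos (snd (last (c1 # R''))))) \<noteq>
            take (Suc (n - r)) (toppos (snd ((c1 # R'') ! i)))" using suf d_def by simp
      qed
      then show ?thesis using R st0 rk by auto
    qed
  qed
qed

theorem mainTheorem10:
  fixes D :: "('q::finite, 'g::finite, 'a::finite) dpda"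
    and n k :: nat
    and R :: "('q, 'g) config list"
  assumes "1 \<le> n" and "is_dpda n D" and "k \<le> n" and "is_run n D R"
  shows "is_upper n D k R \<longleftrightarrow>
     (rlen R = 0
      \<or> (rlen R = 1 \<and>
           ((\<exists>f. step_of D (R ! 0) = Read f)
            \<or> (\<exists>p r g. step_of D (R ! 0) = Op p (Push r g))
            \<or> (\<exists>p r. r \<le> k \<and> step_of D (R ! 0) = Op p (Pop r))))
      \<or> (0 < rlen R \<and>
           (\<exists>p r g. k + 1 \<le> r \<and> step_of D (R ! 0) = Op p (Push r g)
                   \<and> is_return n D r (drop 1 R)))
      \<or> (\<exists>R1 R2. is_run n D R1 \<and> is_run n D R2 \<and> 0 < rlen R1 \<and> 0 < rlen R2
                 \<and> is_upper n D k R1 \<and> is_upper n D k R2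
                 \<and> last R1 = hd R2 \<and> R = comp_run R1 R2))"
  using BACK[OF assms(2,3,4)] FORW[OF assms(2,3,4)] by blast

end
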